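(* Let $\rho$ be a combinatorial depth measure for hyperplanes in $\mathbb{R}^d$ satisfying conditions (i) and (ii) below. Then for every finite hyperplane arrangement $A$ and every $q\in\mathbb{R}^d$, $\rho(A,q)\le \mathrm{RD}(A,q)$. (i) For every arrangement $A$, every $q$ and every hyperplane $h$: $|\rho(A,q)-\rho(A\cup\{h\},q)|\le 1$. (ii) For every arrangement $A$: $\rho(A,q)=0$ whenever $q$ lies in an unbounded cell of $A$.
   Context: A hyperplane arrangement is a finite set of affine hyperplanes in $\mathbb{R}^d$. A depth measure for hyperplanes is a function $\rho$ assigning to each pair $(A,q)$ of a finite arrangement $A$ and a point $q\in\mathbb{R}^d$ a value in $\mathbb{R}_{\ge 0}$; it is combinatorial if, for each $A$, it is constant on each face of $A$ (the relatively open cells of all dimensions of the decomposition of $\mathbb{R}^d$ induced by $A$). Regression depth $\mathrm{RD}(A,q)$: the minimum, over all closed rays emanating from $q$, of the number of hyperplanes of $A$ intersected by or parallel to the ray. *)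

theory Defs
  imports "HOL-Analysis.Analysis"
begin

text \<open>Ambient space R^d is a Euclidean space type 'a (d = DIM('a)).
  A hyperplane is represented as its point set.\<close>

definition hyperplane :: "'a::euclidean_space set \<Rightarrow> bool" where
  "hyperplane h \<longleftrightarrow> (\<exists>a b. a \<noteq> 0 \<and> h = {x. a \<bullet> x = b})"

definition arrangement :: "'a::euclidean_space set set \<Rightarrow> bool" where
  "arrangement A \<longleftrightarrow> finite A \<and> (\<forall>h\<in>A. hyperplane h)"

text \<open>p and q have the same position relative to h: both on h, or on the same
  open side (the segment between them avoids h).\<close>
definition same_position :: "'a::euclidean_space set \<Rightarrow> 'a \<Rightarrow> 'a \<Rightarrow> bool" where
  "same_position h p q \<longleftrightarrow> (p \<in> h \<and> q \<in> h) \<or> closed_segment p q \<inter> h = {}"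

definition same_face :: "'a::euclidean_space set set \<Rightarrow> 'a \<Rightarrow> 'a \<Rightarrow> bool" where
  "same_face A p q \<longleftrightarrow> (\<forall>h\<in>A. same_position h p q)"

definition arr_face :: "'a::euclidean_space set set \<Rightarrow> 'a \<Rightarrow> 'a set" where
  "arr_face A q = {p. same_face A p q}"

definition depth_measure :: "('a::euclidean_space set set \<Rightarrow> 'a \<Rightarrow> real) \<Rightarrow> bool" where
  "depth_measure \<rho> \<longleftrightarrow> (\<forall>A q. arrangement A \<longrightarrow> \<rho> A q \<ge> 0)"

definition combinatorial :: "('a::euclidean_space set set \<Rightarrow> 'a \<Rightarrow> real) \<Rightarrow> bool" where
  "combinatorial \<rho> \<longleftrightarrow> (\<forall>A p q. arrangement A \<and> same_face A p q \<longrightarrow> \<rho> A p = \<rho> A q)"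

text \<open>q lies in an unbounded cell (full-dimensional face) of A.\<close>
definition in_unbounded_cell :: "'a::euclidean_space set set \<Rightarrow> 'a \<Rightarrow> bool" where
  "in_unbounded_cell A q \<longleftrightarrow> (\<forall>h\<in>A. q \<notin> h) \<and> \<not> bounded (arr_face A q)"

definition ray :: "'a::euclidean_space \<Rightarrow> 'a \<Rightarrow> 'a set" where
  "ray q v = {q + t *\<^sub>R v | t. t \<ge> 0}"

definition parallel_dir :: "'a::euclidean_space set \<Rightarrow> 'a \<Rightarrow> bool" where
  "parallel_dir h v \<longleftrightarrow> (\<forall>x\<in>h. x + v \<in> h)"

definition regression_depth :: "'a::euclidean_space set set \<Rightarrow> 'a \<Rightarrow> nat" where
  "regression_depth A q =
     Min {card {h\<in>A. ray q v \<inter> h \<noteq> {} \<or> parallel_dir h v} | v. v \<noteq> 0}"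

end

theory Submission
  imports Defs
begin

lemma add_hyps:
  fixes \<rho> :: "'a::euclidean_space set set \<Rightarrow> 'a \<Rightarrow> real"
  assumes step: "\<And>A q h. arrangement A \<Longrightarrow> hyperplane h \<Longrightarrow> \<bar>\<rho> A q - \<rho> (insert h A) q\<bar> \<le> 1"
    and "finite B" "\<forall>h\<in>B. hyperplane h" "arrangement C"
  shows "\<rho> (B \<union> C) q \<le> \<rho> C q + real (card B)"
  using assms(2-)
proof (induction B rule: finite_induct)
  case empty thus ?case by simp
next
  case (insert x F)
  have arr: "arrangement (F \<union> C)" using insert.prems insert.hyps
    by (auto simp: arrangement_def)
  have "\<rho> (insert x (F \<union> C)) q \<le> \<rho> (F \<union> C) q + 1"
    using step[OF arr, of x q] insert.prems by auto
  moreover have "\<rho> (F \<union> C) q \<le> \<rho> C q + real (card F)" using insert by auto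
  ultimately show ?case using insert.hyps by simp
qed

theorem lemma3p2:
  fixes \<rho> :: "'a::euclidean_space set set \<Rightarrow> 'a \<Rightarrow> real"
  assumes "depth_measure \<rho>"
    and "combinatorial \<rho>"
    and "\<And>A q h. arrangement A \<Longrightarrow> hyperplane h \<Longrightarrow> \<bar>\<rho> A q - \<rho> (insert h A) q\<bar> \<le> 1"
    and "\<And>A q. arrangement A \<Longrightarrow> in_unbounded_cell A q \<Longrightarrow> \<rho> A q = 0"
    and "arrangement A"
  shows "\<rho> A q \<le> real (regression_depth A q)"
proof -
  define f where "f v = card {h\<in>A. ray q v \<inter> h \<noteq> {} \<or> parallel_dir h v}" for v
  define S where "S = {f v | v. v \<noteq> 0}"
  have fA: "finite A" using assms(5) by (simp add: arrangement_def)
  have "S \<subseteq> {0..card A}" unfolding S_def f_def using fA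
    by (auto intro!: card_mono)
  hence finS: "finite S" using finite_subset by blast
  obtain b :: 'a where "b \<in> Basis" by (meson ex_in_conv nonempty_Basis)
  hence "b \<noteq> 0" by auto
  hence "S \<noteq> {}" unfolding S_def by auto
  hence "Min S \<in> S" using finS Min_in by blast
  then obtain v where v: "v \<noteq> 0" "regression_depth A q = f v"
    unfolding S_def regression_depth_def f_def by auto
  define B where "B = {h\<in>A. ray q v \<inter> h \<noteq> {} \<or> parallel_dir h v}"
  define C where "C = A - B"
  have AB: "A = B \<union> C" unfolding C_def B_def by auto
  have arrC: "arrangement C" using assms(5) fA unfolding C_def arrangement_def by auto
  have finB: "finite B" "\<forall>h\<in>B. hyperplane h" using fA assms(5)
    unfolding B_def arrangement_def by auto
  have miss: "\<And>h. h \<in> C \<Longrightarrow> ray q v \<inter> h = {}" unfolding C_def B_def by auto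
  have qray: "q \<in> ray q v" unfolding ray_def by (auto intro!: exI[of _ 0])
  have segsub: "closed_segment p q \<subseteq> ray q v" if pr: "p \<in> ray q v" for p
  proof
    fix x assume "x \<in> closed_segment p q"
    then obtain u where u: "0 \<le> u" "u \<le> 1" "x = (1 - u) *\<^sub>R p + u *\<^sub>R q"
      by (auto simp: closed_segment_def)
    obtain t where t: "t \<ge> 0" "p = q + t *\<^sub>R v" using pr unfolding ray_def by auto
    have "x = q + ((1-u)*t) *\<^sub>R v" using u t by (simp add: algebra_simps)
    moreover have "(1-u)*t \<ge> 0" using u t by simp
    ultimately show "x \<in> ray q v" unfolding ray_def by blast
  qed
  have rayface: "ray q v \<subseteq> arr_face C q"
    unfolding arr_face_def same_face_def same_position_def
    using segsub miss by blast
  have "\<not> bounded (ray q v)"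
  proof
    assume "bounded (ray q v)"
    then obtain M where M: "\<And>x. x \<in> ray q v \<Longrightarrow> norm x \<le> M" by (auto simp: bounded_iff)
    define t where "t = (\<bar>M\<bar> + norm q + 1) / norm v"
    have nv: "norm v > 0" using v by simp
    have "t \<ge> 0" unfolding t_def by simp
    hence "q + t *\<^sub>R v \<in> ray q v" unfolding ray_def by blast
    hence "norm (q + t *\<^sub>R v) \<le> M" by (rule M)
    moreover have "norm (t *\<^sub>R v) = \<bar>M\<bar> + norm q + 1" unfolding t_def using nv by simp
    moreover have "norm (t *\<^sub>R v) \<le> norm (q + t *\<^sub>R v) + norm q"
      by (metis add_diff_cancel_left' norm_triangle_ineq4 add.commute)
    ultimately show False by simp
  qed
  hence unb: "in_unbounded_cell C q"
    unfolding in_unbounded_cell_def using rayface miss qray bounded_subset by blast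
  have "\<rho> C q = 0" using assms(4)[OF arrC unb] .
  moreover have "\<rho> A q \<le> \<rho> C q + real (card B)"
    using add_hyps[of \<rho> B C q, OF assms(3) finB arrC] AB by simp
  ultimately show ?thesis using v unfolding f_def B_def by simp
qed

end
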